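(* Suppose $X\mid\theta\sim\mathrm{Poi}(\theta)$ and $\theta\sim G$, where $G$ is a probability measure on $[0,\infty)$ with $\mathbb E_G[\theta^4]\le M$ for some constant $M\ge1$. Let $\hat G$ be any (possibly unbounded) estimator of $G$, i.e., a random probability measure on $[0,\infty)$, independent of $(\theta,X)$. For a probability measure $\tilde G$ on $[0,\infty)$ let $f_{\tilde G}$ be the marginal pmf of $X$ induced by $\tilde G$ (i.e., $f_{\tilde G}(x)=\int e^{-\theta}\theta^x/x!\,d\tilde G(\theta)$) and $\hat\theta_{\tilde G}(x)=(x+1)f_{\tilde G}(x+1)/f_{\tilde G}(x)$. Suppose that for some $\kappa>0$, $\hat\theta_{\hat G}(x)\le x+\kappa$ for all $x\in\mathbb Z_+$ almost surely. Then for any $h>0$ with $G([0,h])>1/2$ and any $K\ge1$, $$\begin{aligned}\mathbb E_G\big[(\hat\theta_G(X)-\hat\theta_{\hat G}(X))^2\big]&\le\big(12(h^2+(K+\kappa)^2)+48(h+K+\kappa)K\big)\Big(\mathbb E_G\big[\mathfrak H^2(f_G,f_{\hat G})\big]+4G((h,\infty))\Big)\\&\quad+2\sqrt2\Big((2h+\kappa)^2+\sqrt{h+3h^2}\Big)\sqrt{\rho_K(G)}+2(1+6\sqrt{15})\sqrt{(\kappa^4+M)\,G((h,\infty))},\end{aligned}$$ where $\rho_K(G)=\mathbb P_G(X\ge K)$.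
   Context: The squared Hellinger distance between pmfs on $\mathbb Z_+$ is $\mathfrak H^2(p,q)=\frac12\sum_{x=0}^\infty(\sqrt{p(x)}-\sqrt{q(x)})^2$. *)

theory Defs
  imports "HOL-Probability.Probability"
begin

definition pois_marg :: "real measure \<Rightarrow> nat \<Rightarrow> real" where
  "pois_marg G x = (\<integral>\<theta>. exp (- \<theta>) * \<theta> ^ x / fact x \<partial>G)"

text \<open>Bayes (Robbins) estimator; division by zero yields 0 (Isabelle convention).\<close>
definition pois_bayes :: "real measure \<Rightarrow> nat \<Rightarrow> real" where
  "pois_bayes G x = (real x + 1) * pois_marg G (x + 1) / pois_marg G x"

definition hellinger_sq :: "(nat \<Rightarrow> real) \<Rightarrow> (nat \<Rightarrow> real) \<Rightarrow> real" where
  "hellinger_sq p q = (1/2) * (\<Sum>x. (sqrt (p x) - sqrt (q x))^2)"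

definition rho :: "real \<Rightarrow> real measure \<Rightarrow> real" where
  "rho K G = (\<Sum>x. if K \<le> real x then pois_marg G x else 0)"

end

theory Submission
  imports Defs
begin

definition phi :: "real \<Rightarrow> nat \<Rightarrow> real" where
  "phi t x = exp (- t) * t ^ x / fact x"

lemma phi_nonneg: "0 \<le> t \<Longrightarrow> 0 \<le> phi t x"
  by (simp add: phi_def)

lemma phi_sums: "(\<lambda>x. phi t x) sums 1"
proof -
  have "(\<lambda>n. exp (-t) * (t^n /\<^sub>R fact n)) sums (exp (-t) * exp t)"
    by (intro sums_mult exp_converges)
  moreover have "exp (-t) * exp t = 1" by (simp add: exp_minus)
  ultimately show ?thesis by (simp add: phi_def divide_simps)
qed

lemma phi_le1: "0 \<le> t \<Longrightarrow> phi t x \<le> 1"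
  using phi_sums[of t] sum_le_suminf[of "phi t" "{x}"] phi_nonneg[of t]
  by (auto simp: sums_iff)

lemma sums_eq: 
  assumes "f sums a" "\<And>n. f n = g n" "a = b" shows "g sums b"
proof -
  have "f = g" using assms(2) by auto
  thus ?thesis using assms by simp
qed

lemma phi_shift: "t * phi t x = (real x + 1) * phi t (Suc x)"
proof -
  have f: "(fact (Suc x)::real) = (real x + 1) * fact x" by (simp add: algebra_simps)
  show ?thesis unfolding phi_def f by (simp add: divide_simps)
qed

lemma phi_shift_sums:
  assumes "(\<lambda>n. phi t n * q (Suc n)) sums S"
  shows "(\<lambda>n. phi t n * (real n * q n)) sums (t * S)"
proof -
  have "(\<lambda>n. t * (phi t n * q (Suc n))) sums (t * S)" by (intro sums_mult assms)
  also have "(\<lambda>n. t * (phi t n * q (Suc n))) = (\<lambda>n. phi t (Suc n) * (real (Suc n) * q (Suc n)))"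
  proof
    fix n
    have "t * (phi t n * q (Suc n)) = (t * phi t n) * q (Suc n)" by simp
    also have "\<dots> = ((real n + 1) * phi t (Suc n)) * q (Suc n)" by (simp only: phi_shift)
    also have "\<dots> = phi t (Suc n) * ((real n + 1) * q (Suc n))" by (simp only: mult_ac)
    also have "\<dots> = phi t (Suc n) * (real (Suc n) * q (Suc n))" by simp
    finally show "t * (phi t n * q (Suc n)) = phi t (Suc n) * (real (Suc n) * q (Suc n))" .
  qed
  finally show ?thesis by (subst (asm) sums_Suc_iff) simp
qed

lemma phi_m1: "(\<lambda>n. phi t n * real n) sums t"
  using phi_shift_sums[of t "\<lambda>_. 1" 1] phi_sums[of t] by simp

lemma phi_m2: "(\<lambda>n. phi t n * real n ^ 2) sums (t^2 + t)"
proof -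
  have "(\<lambda>n. phi t n * real n + phi t n) sums (t + 1)"
    by (intro sums_add phi_m1 phi_sums)
  hence "(\<lambda>n. phi t n * real (Suc n)) sums (t + 1)" by (simp add: algebra_simps)
  from phi_shift_sums[of t "\<lambda>n. real n", OF this] show ?thesis
    by (simp add: power2_eq_square algebra_simps)
qed

lemma phi_m3: "(\<lambda>n. phi t n * real n ^ 3) sums (t^3 + 3*t^2 + t)"
proof -
  have "(\<lambda>n. phi t n * real n ^ 2 + 2 * (phi t n * real n) + phi t n) sums ((t^2 + t) + 2 * t + 1)"
    by (intro sums_add sums_mult phi_m1 phi_m2 phi_sums)
  hence "(\<lambda>n. phi t n * real (Suc n) ^ 2) sums ((t^2 + t) + 2 * t + 1)"
    by (rule sums_eq) (simp_all add: algebra_simps power2_eq_square)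
  from phi_shift_sums[of t "\<lambda>n. real n ^ 2", OF this] show ?thesis
    by (rule sums_eq) (simp_all add: power2_eq_square power3_eq_cube algebra_simps)
qed

lemma phi_m4: "(\<lambda>n. phi t n * real n ^ 4) sums (t^4 + 6*t^3 + 7*t^2 + t)"
proof -
  have "(\<lambda>n. phi t n * real n ^ 3 + 3 * (phi t n * real n ^ 2) + 3 * (phi t n * real n) + phi t n)
      sums ((t^3 + 3*t^2 + t) + 3 * (t^2 + t) + 3 * t + 1)"
    by (intro sums_add sums_mult phi_m1 phi_m2 phi_m3 phi_sums)
  hence "(\<lambda>n. phi t n * real (Suc n) ^ 3) sums ((t^3 + 3*t^2 + t) + 3 * (t^2 + t) + 3 * t + 1)"
    by (rule sums_eq) (simp_all add: algebra_simps power2_eq_square power3_eq_cube)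
  from phi_shift_sums[of t "\<lambda>n. real n ^ 3", OF this] show ?thesis
    by (rule sums_eq) (simp_all add: power2_eq_square power3_eq_cube power4_eq_xxxx algebra_simps)
qed

lemma phi_c4: "(\<lambda>n. (real n - t) ^ 4 * phi t n) sums (t + 3 * t^2)"
proof -
  have "(\<lambda>n. phi t n * real n ^ 4 - 4 * t * (phi t n * real n ^ 3) + 6 * t^2 * (phi t n * real n ^ 2)
        - 4 * t^3 * (phi t n * real n) + t^4 * phi t n)
      sums ((t^4 + 6*t^3 + 7*t^2 + t) - 4 * t * (t^3 + 3*t^2 + t) + 6 * t^2 * (t^2 + t)
        - 4 * t^3 * t + t^4 * 1)"
    by (intro sums_add sums_diff sums_mult phi_m1 phi_m2 phi_m3 phi_m4 phi_sums)
  then show ?thesis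
  proof (rule sums_eq)
    show "\<And>n. phi t n * real n ^ 4 - 4 * t * (phi t n * real n ^ 3) + 6 * t^2 * (phi t n * real n ^ 2)
        - 4 * t^3 * (phi t n * real n) + t^4 * phi t n = (real n - t) ^ 4 * phi t n"
      by (simp add: power_def numeral_eq_Suc algebra_simps)
    show "(t^4 + 6*t^3 + 7*t^2 + t) - 4 * t * (t^3 + 3*t^2 + t) + 6 * t^2 * (t^2 + t)
        - 4 * t^3 * t + t^4 * 1 = t + 3 * t^2"
      by (simp add: power_def numeral_eq_Suc algebra_simps)
  qed
qed

lemma pow4_sum_le: "((u::real) + v) ^ 4 \<le> 8 * (u ^ 4 + v ^ 4)"
proof -
  have a: "(u + v)^2 \<le> 2 * (u^2 + v^2)" using sum_squares_ge_zero[of "u - v" 0]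
    by (simp add: power2_eq_square algebra_simps)
  have "(u + v) ^ 4 = ((u+v)^2)^2" by simp
  also have "\<dots> \<le> (2 * (u^2 + v^2))^2" using a by (intro power_mono) auto
  also have "\<dots> \<le> 8 * (u ^ 4 + v ^ 4)"
    using zero_le_square[of "u^2 - v^2"] by (simp add: power2_eq_square algebra_simps power4_eq_xxxx)
  finally show ?thesis .
qed

lemma phi_c4_bound:
  assumes "0 \<le> t" "0 \<le> c"
  shows "summable (\<lambda>n. (real n + c) ^ 4 * phi t n)"
    and "(\<Sum>n. (real n + c) ^ 4 * phi t n) \<le> 8 * (t + 3 * t^2 + (t + c)^4)"
proof -
  have le: "(real n + c) ^ 4 * phi t n \<le> 8 * ((real n - t) ^ 4 * phi t n) + 8 * (t + c)^4 * phi t n" for n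
  proof -
    have "(real n + c) ^ 4 \<le> 8 * ((real n - t) ^ 4 + (t + c)^4)"
      using pow4_sum_le[of "real n - t" "t + c"] by simp
    from mult_right_mono[OF this phi_nonneg[OF assms(1)]] show ?thesis by (simp add: algebra_simps)
  qed
  have s: "(\<lambda>n. 8 * ((real n - t) ^ 4 * phi t n) + 8 * (t + c)^4 * phi t n) sums (8 * (t + 3 * t^2) + 8 * (t+c)^4 * 1)"
    by (intro sums_add sums_mult phi_c4 phi_sums)
  show sm: "summable (\<lambda>n. (real n + c) ^ 4 * phi t n)"
    by (rule summable_comparison_test[OF _ sums_summable[OF s]])
       (use le assms phi_nonneg in \<open>auto intro!: exI[of _ 0]\<close>)
  have "(\<Sum>n. (real n + c) ^ 4 * phi t n) \<le> (8 * (t + 3 * t^2) + 8 * (t+c)^4 * 1)"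
    using suminf_le[OF le sm sums_summable[OF s]] s by (simp add: sums_iff)
  thus "(\<Sum>n. (real n + c) ^ 4 * phi t n) \<le> 8 * (t + 3 * t^2 + (t + c)^4)" by simp
qed

lemma phi_sq_bound:
  assumes "0 \<le> t" "0 \<le> k"
  shows "summable (\<lambda>n. (real n + k) ^ 2 * phi t n)"
    and "(\<Sum>n. (real n + k) ^ 2 * phi t n) \<le> 4 * t^2 + 2 * k^2 + 1/4"
proof -
  have s: "(\<lambda>n. phi t n * real n ^ 2 + 2 * k * (phi t n * real n) + k^2 * phi t n) sums ((t^2 + t) + 2 * k * t + k^2 * 1)"
    by (intro sums_add sums_mult phi_m1 phi_m2 phi_sums)
  have e: "(\<lambda>n. phi t n * real n ^ 2 + 2 * k * (phi t n * real n) + k^2 * phi t n) = (\<lambda>n. (real n + k) ^ 2 * phi t n)"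
    by (auto simp: power2_eq_square algebra_simps)
  show "summable (\<lambda>n. (real n + k) ^ 2 * phi t n)" using s e sums_summable by metis
  have "(\<Sum>n. (real n + k) ^ 2 * phi t n) = (t^2 + t) + 2 * k * t + k^2" using s e by (simp add: sums_iff)
  also have "\<dots> \<le> 4 * t^2 + 2 * k^2 + 1/4"
  proof -
    have h1: "2*k*t \<le> k*k + t*t" using zero_le_square[of "t-k"] by (simp add: power2_eq_square algebra_simps)
    have h2: "t \<le> t*t + 1/4" using zero_le_square[of "t-1/2"] by (simp add: power2_eq_square algebra_simps)
    have h3: "0 \<le> t*t" "0 \<le> k*k" by simp_all
    show ?thesis unfolding power2_eq_square using h1 h2 h3 by linarith
  qed
  finally show "(\<Sum>n. (real n + k) ^ 2 * phi t n) \<le> 4 * t^2 + 2 * k^2 + 1/4" .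
qed

lemma phi_measurable[measurable]: "(\<lambda>t. phi t x) \<in> borel_measurable borel"
  unfolding phi_def by measurable

lemma pois_marg_phi: "pois_marg N x = (\<integral>t. phi t x \<partial>N)"
  by (simp add: pois_marg_def phi_def)

lemma meas_N:
  assumes "sets N = sets borel" "f \<in> borel_measurable borel"
  shows "f \<in> borel_measurable N"
  by (subst measurable_cong_sets[OF assms(1) refl]) (rule assms(2))

lemma integrable_phi:
  assumes "prob_space N" "sets N = sets borel" "AE t in N. 0 \<le> t"
  shows "integrable N (\<lambda>t. phi t x)"
proof -
  interpret prob_space N by fact
  show ?thesis
  proof (rule integrable_const_bound[where B=1])
    show "AE t in N. norm (phi t x) \<le> 1"
      using assms(3) by eventually_elim (simp add: phi_le1 phi_nonneg)
    show "(\<lambda>t. phi t x) \<in> borel_measurable N" by (rule meas_N[OF assms(2)]) measurable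
  qed
qed

lemma ennreal_sum_le_real:
  assumes "(\<Sum>x. ennreal (f x)) \<le> ennreal c" "\<And>x. 0 \<le> f x" "0 \<le> c"
  shows "summable f" "suminf f \<le> c"
proof -
  show s: "summable f" using assms by (intro summable_suminf_not_top) (auto simp: top_unique)
  have "ennreal (suminf f) \<le> ennreal c" using assms suminf_ennreal2[OF assms(2) s] by simp
  moreover have "0 \<le> suminf f" using s assms(2) by (simp add: suminf_nonneg)
  ultimately show "suminf f \<le> c"
    using ennreal_le_iff[OF assms(3)] by simp
qed

lemma swap_le:
  assumes N: "prob_space N" "sets N = sets borel" "AE t in N. 0 \<le> t"
    and W: "W \<in> borel_measurable borel" "\<And>t. 0 \<le> t \<Longrightarrow> 0 \<le> W t"
    and int: "\<And>x. integrable N (\<lambda>t. W t * phi t x)"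
    and q: "\<And>x. 0 \<le> q x" "\<And>t. 0 \<le> t \<Longrightarrow> summable (\<lambda>x. q x * phi t x)"
    and B: "\<And>t. 0 \<le> t \<Longrightarrow> W t * (\<Sum>x. q x * phi t x) \<le> W t * B t"
      "integrable N (\<lambda>t. W t * B t)"
  shows "(\<Sum>x. ennreal (q x * (\<integral>t. W t * phi t x \<partial>N))) \<le> ennreal (\<integral>t. W t * B t \<partial>N)"
proof -
  have m[measurable]: "(\<lambda>t. W t * phi t x) \<in> borel_measurable N" for x
    using int by (rule borel_measurable_integrable)
  have e: "ennreal (q x * (\<integral>t. W t * phi t x \<partial>N)) = (\<integral>\<^sup>+t. ennreal (q x * (W t * phi t x)) \<partial>N)" for x
  proof -
    have "q x * (\<integral>t. W t * phi t x \<partial>N) = (\<integral>t. q x * (W t * phi t x) \<partial>N)" by simp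
    also have "ennreal \<dots> = (\<integral>\<^sup>+t. ennreal (q x * (W t * phi t x)) \<partial>N)"
      by (rule nn_integral_eq_integral[symmetric])
         (use int N(3) in \<open>auto intro!: integrable_mult_right elim!: eventually_mono simp: W phi_nonneg q\<close>)
    finally show ?thesis by simp
  qed
  have "(\<Sum>x. ennreal (q x * (\<integral>t. W t * phi t x \<partial>N))) = (\<integral>\<^sup>+t. (\<Sum>x. ennreal (q x * (W t * phi t x))) \<partial>N)"
    unfolding e by (rule nn_integral_suminf[symmetric]) measurable
  also have "\<dots> \<le> (\<integral>\<^sup>+t. ennreal (W t * B t) \<partial>N)"
  proof (rule nn_integral_mono_AE)
    show "AE t in N. (\<Sum>x. ennreal (q x * (W t * phi t x))) \<le> ennreal (W t * B t)"
      using N(3)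
    proof eventually_elim
      case (elim t)
      have "(\<Sum>x. ennreal (q x * (W t * phi t x))) = ennreal (\<Sum>x. W t * (q x * phi t x))"
        by (subst suminf_ennreal2[symmetric])
           (auto simp: elim W q phi_nonneg mult_ac intro!: summable_mult)
      also have "\<dots> = ennreal (W t * (\<Sum>x. q x * phi t x))"
        by (subst suminf_mult) (auto simp: q elim)
      also have "\<dots> \<le> ennreal (W t * B t)" using B(1)[OF elim] by (rule ennreal_leI)
      finally show ?case .
    qed
  qed
  also have "\<dots> = ennreal (\<integral>t. W t * B t \<partial>N)"
  proof (rule nn_integral_eq_integral[OF B(2)])
    show "AE t in N. 0 \<le> W t * B t" using N(3)
    proof eventually_elim
      case (elim t)
      have "0 \<le> W t * (\<Sum>x. q x * phi t x)"
        using elim W q by (auto intro!: mult_nonneg_nonneg suminf_nonneg phi_nonneg)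
      thus ?case using B(1)[OF elim] by linarith
    qed
  qed
  finally show ?thesis .
qed

lemma titu:
  fixes F0 F1 u0 u1 :: real
  assumes "0 \<le> F0" "0 \<le> F1" "F0 = 0 \<Longrightarrow> u0 = 0" "F1 = 0 \<Longrightarrow> u1 = 0"
  shows "(u0 + u1)^2 / (F0 + F1) \<le> u0^2 / F0 + u1^2 / F1"
proof (cases "F0 = 0 \<or> F1 = 0")
  case True
  then show ?thesis using assms by auto
next
  case False
  hence p: "0 < F0" "0 < F1" using assms by auto
  have key: "(u0 + u1)^2 * (F0 * F1) \<le> (u0^2 * F1 + u1^2 * F0) * (F0 + F1)"
  proof -
    have "(u0^2 * F1 + u1^2 * F0) * (F0 + F1) - (u0 + u1)^2 * (F0 * F1) = (u0 * F1 - u1 * F0)^2"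
      by (simp add: power2_eq_square algebra_simps)
    thus ?thesis by (smt (verit) zero_le_power2)
  qed
  have p2: "0 < F0 + F1" "0 < F0 * F1" using p by auto
  have "(u0 + u1)^2 / (F0 + F1) = (u0 + u1)^2 * (F0 * F1) / ((F0 + F1) * (F0 * F1))"
    by (rule mult_divide_mult_cancel_right[symmetric]) (use p2 in auto)
  also have "\<dots> \<le> (u0^2 * F1 + u1^2 * F0) * (F0 + F1) / ((F0 + F1) * (F0 * F1))"
    using p key by (intro divide_right_mono) auto
  also have "\<dots> = (u0^2 * F1 + u1^2 * F0) / (F0 * F1)"
    using p2 by (subst mult.commute) (simp add: mult_divide_mult_cancel_left_if)
  also have "\<dots> = u0^2 / F0 + u1^2 / F1" using p by (simp add: field_simps)
  finally show ?thesis .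
qed

lemma cs_disc:
  fixes F M Q :: real
  assumes "0 \<le> F" "\<And>s. 0 \<le> F * s^2 - 2 * M * s + Q"
  shows "M^2 \<le> F * Q"
proof (cases "F = 0")
  case True
  have "M = 0"
  proof (rule ccontr)
    assume "M \<noteq> 0"
    have "0 \<le> F * ((Q+1)/(2*M))^2 - 2 * M * ((Q+1)/(2*M)) + Q" by (rule assms(2))
    also have "\<dots> = -1" using True \<open>M \<noteq> 0\<close> by (simp add: field_simps)
    finally show False by simp
  qed
  thus ?thesis using True by simp
next
  case False
  hence p: "0 < F" using assms by auto
  have "0 \<le> F * (M/F)^2 - 2 * M * (M/F) + Q" by (rule assms(2))
  also have "\<dots> = Q - M^2 / F" using p by (simp add: field_simps power2_eq_square)
  finally have "M^2 / F \<le> Q" by simp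
  thus ?thesis using p by (simp add: field_simps)
qed

lemma core_big:
  fixes m0 F0 b h y :: real
  assumes "0 \<le> m0" "m0 \<le> h * F0" "0 \<le> F0" "0 \<le> b" "b \<le> y" "0 \<le> h"
  shows "(m0 - b * F0)^2 / F0 \<le> (y + h)^2 * F0"
proof (cases "F0 = 0")
  case True then show ?thesis by simp
next
  case False
  hence p: "0 < F0" using assms by auto
  have q: "0 \<le> F0*b" "F0*b \<le> F0*y" "m0 \<le> F0*h" "0 \<le> F0*h"
    using assms mult_left_mono[OF assms(5) assms(3)] by (auto simp: mult.commute)
  have "\<bar>m0 - b * F0\<bar> \<le> (y + h) * F0"
    using q assms(1) by (simp add: abs_le_iff algebra_simps)
  hence "(m0 - b * F0)^2 \<le> ((y + h) * F0)^2"
    by (metis abs_ge_zero order_trans power2_abs power_mono)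
  hence "(m0 - b * F0)^2 / F0 \<le> ((y + h) * F0)^2 / F0" using p by (intro divide_right_mono) auto
  also have "\<dots> = (y + h)^2 * F0" using p by (simp add: power2_eq_square)
  finally show ?thesis .
qed

lemma core_tail:
  fixes m1 F1 Q1 b :: real
  assumes "0 \<le> F1" "m1^2 \<le> F1 * Q1" "0 \<le> Q1"
  shows "(m1 - b * F1)^2 / F1 \<le> 2 * Q1 + 2 * b^2 * F1"
proof (cases "F1 = 0")
  case True then show ?thesis using assms by simp
next
  case False
  hence p: "0 < F1" using assms by auto
  have "(m1 - b * F1)^2 \<le> 2 * m1^2 + 2 * (b * F1)^2"
    using zero_le_square[of "m1 + b * F1"] by (simp add: power2_eq_square algebra_simps)
  also have "\<dots> \<le> 2 * (F1 * Q1) + 2 * (b * F1)^2" using assms by simp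
  finally have "(m1 - b * F1)^2 / F1 \<le> (2 * (F1 * Q1) + 2 * (b * F1)^2) / F1"
    using p by (intro divide_right_mono) auto
  also have "\<dots> = 2 * Q1 + 2 * b^2 * F1" using p by (simp add: field_simps power2_eq_square)
  finally show ?thesis .
qed

lemma sq_split:
  fixes u v :: real
  shows "(u - v) ^ 2 \<le> 3 * u ^ 2 + 3 / 2 * v ^ 2"
proof -
  have "3 * u ^ 2 + 3 / 2 * v ^ 2 - (u - v) ^ 2 = 2 * (u + v / 2) ^ 2" by (simp add: power2_eq_square algebra_simps)
  thus ?thesis by (smt (verit) zero_le_power2)
qed

lemma core_small:
  fixes F0 F0' g g' b s m0 :: real
  assumes "0 \<le> F0" "0 \<le> F0'" "0 \<le> g" "0 \<le> g'" "0 \<le> b" "0 < s"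
    "s * g' = b * g" "m0 = s * F0'" "0 \<le> m0" "F0 = 0 \<Longrightarrow> m0 = 0"
  shows "(m0 - b * F0)^2 / F0 \<le> 2 * (m0 / F0 + b) *
           (3 * s * (sqrt F0' - sqrt g')^2 + 3/2 * b * (sqrt F0 - sqrt g)^2)"
proof (cases "F0 = 0")
  case True
  then show ?thesis using assms by (auto intro!: mult_nonneg_nonneg add_nonneg_nonneg)
next
  case False
  hence p: "0 < F0" using assms by auto
  define al where "al = m0 / F0"
  have al0: "0 \<le> al" using assms p by (simp add: al_def)
  have m0e: "m0 = al * F0" using p by (simp add: al_def)
  define A where "A = sqrt al"
  define B where "B = sqrt b"
  define P where "P = sqrt F0"
  define Pg where "Pg = sqrt g"
  define P' where "P' = sqrt F0'"
  define Pg' where "Pg' = sqrt g'"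
  define S where "S = sqrt s"
  have AA: "A^2 = al" "0 \<le> A" using al0 by (simp_all add: A_def)
  have BB: "B^2 = b" "0 \<le> B" using assms by (simp_all add: B_def)
  have PP: "P^2 = F0" using assms by (simp add: P_def)
  have SS: "S^2 = s" using assms by (simp add: S_def)
  have e1: "A * P = S * P'"
  proof -
    have "A * P = sqrt (al * F0)" by (simp add: A_def P_def real_sqrt_mult)
    also have "\<dots> = sqrt (s * F0')" using m0e assms by simp
    finally show ?thesis by (simp add: S_def P'_def real_sqrt_mult)
  qed
  have e2: "B * Pg = S * Pg'"
  proof -
    have "B * Pg = sqrt (b * g)" by (simp add: B_def Pg_def real_sqrt_mult)
    also have "\<dots> = sqrt (s * g')" using assms by simp
    finally show ?thesis by (simp add: S_def Pg'_def real_sqrt_mult)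
  qed
  have e3: "P * (A - B) = S * (P' - Pg') - B * (P - Pg)"
    using e1 e2 by (simp add: algebra_simps)
  have "m0 - b*F0 = (A^2 - B^2) * P^2" by (simp add: m0e AA BB PP algebra_simps)
  hence "(m0 - b * F0)^2 / F0 = ((A^2 - B^2) * P^2)^2 / P^2" using PP by simp
  also have "\<dots> = (A^2 - B^2)^2 * P^2" using p PP by (simp add: power_mult_distrib power2_eq_square)
  also have "\<dots> = (P * (A - B))^2 * (A + B)^2" by (simp add: power2_eq_square algebra_simps)
  finally have "(m0 - b * F0)^2 / F0 = (P * (A - B))^2 * (A + B)^2" .
  also have "\<dots> \<le> (3 * s * (P' - Pg')^2 + 3/2 * b * (P - Pg)^2) * (2 * (al + b))"
  proof (rule mult_mono)
    have "(S * (P' - Pg') - B * (P - Pg))^2 \<le> 3 * S^2 * (P' - Pg')^2 + 3/2 * B^2 * (P - Pg)^2"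
      using sq_split[of "S * (P' - Pg')" "B * (P - Pg)"] by (simp add: power_mult_distrib)
    thus "(P * (A - B))^2 \<le> 3 * s * (P' - Pg')^2 + 3/2 * b * (P - Pg)^2"
      using e3 SS BB by simp
    have "(A + B)^2 \<le> 2 * (A^2 + B^2)"
      using zero_le_square[of "A - B"] by (simp add: power2_eq_square algebra_simps)
    thus "(A + B)^2 \<le> 2 * (al + b)" using AA BB by simp
  qed (use assms in auto)
  finally show ?thesis by (simp add: al_def P_def Pg_def P'_def Pg'_def mult_ac)
qed

lemma opt_lambda:
  fixes X e M :: real
  assumes "0 \<le> e" "0 < M" "\<And>l. 0 < l \<Longrightarrow> X \<le> (l * e + M / l) / 2"
  shows "X \<le> sqrt (e * M)"
proof (cases "e = 0")
  case True
  show ?thesis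
  proof (rule ccontr)
    assume "\<not> X \<le> sqrt (e * M)"
    hence X: "0 < X" using True by simp
    have "X \<le> (M / X * e + M / (M / X)) / 2" using assms(3)[of "M / X"] X assms(2) by simp
    also have "\<dots> = X / 2" using True X assms(2) by simp
    finally show False using X by simp
  qed
next
  case False
  hence p: "0 < e" using assms by auto
  define l where "l = sqrt M / sqrt e"
  have l: "0 < l" using p assms by (simp add: l_def)
  have "X \<le> (l * e + M / l) / 2" using assms(3)[OF l] .
  also have "l * e = sqrt M * sqrt e"
    using p by (simp add: l_def field_simps)
  also have "M / l = sqrt M * sqrt e"
    using p assms by (simp add: l_def field_simps)
  finally show ?thesis by (simp add: real_sqrt_mult mult.commute)
qed

lemma small_coef:
  fixes al b s h K k y D1 D0 :: real
  assumes "0 \<le> al" "al \<le> h" "0 \<le> b" "b \<le> y + k" "y < K" "0 \<le> y" "1 \<le> K" "s = y + 1"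
  shows "2 * (al + b) * (3 * s * D1^2 + 3/2 * b * D0^2)
     \<le> 12 * (h + K + k) * K * D1^2 + 9/2 * (h^2 + (K + k)^2) * D0^2"
proof -
  have s2: "s \<le> 2 * K" "0 \<le> s" using assms by auto
  have ab: "al + b \<le> h + K + k" "0 \<le> al + b" using assms by auto
  have c1: "(al + b) * s \<le> (h + K + k) * (2 * K)"
    by (rule mult_mono) (use s2 ab assms in auto)
  have c2: "(al + b) * b \<le> 3/2 * (h^2 + (K + k)^2)"
  proof -
    have "al * b \<le> 1/2 * (al^2 + b^2)"
      using zero_le_square[of "al - b"] by (simp add: power2_eq_square algebra_simps)
    moreover have "al^2 \<le> h^2" using assms by (intro power_mono) auto
    moreover have "b^2 \<le> (K + k)^2" using assms by (intro power_mono) auto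
    moreover have "0 \<le> h^2" by simp
    ultimately show ?thesis unfolding power2_eq_square by (simp add: distrib_right, insert zero_le_square[of h], linarith)
  qed
  have "2 * (al + b) * (3 * s * D1^2 + 3/2 * b * D0^2)
      = 6 * ((al + b) * s) * D1^2 + 3 * ((al + b) * b) * D0^2" by (simp add: algebra_simps)
  also have "\<dots> \<le> 6 * ((h + K + k) * (2 * K)) * D1^2 + 3 * (3/2 * (h^2 + (K + k)^2)) * D0^2"
    by (intro add_mono mult_right_mono mult_left_mono c1 c2) auto
  also have "\<dots> = 12 * (h + K + k) * K * D1^2 + 9/2 * (h^2 + (K + k)^2) * D0^2"
    by (simp add: algebra_simps)
  finally show ?thesis by simp
qed

lemma marg_zero_Suc:
  assumes "prob_space N" "sets N = sets borel" "AE t in N. 0 \<le> t" "pois_marg N x = 0"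
  shows "pois_marg N (Suc x) = 0"
proof -
  have nn: "AE t in N. 0 \<le> phi t x" using assms(3) by (auto elim!: eventually_mono simp: phi_nonneg)
  have "(\<integral>t. phi t x \<partial>N) = 0" using assms(4) by (simp add: pois_marg_phi)
  hence "AE t in N. phi t x = 0" using integral_nonneg_eq_0_iff_AE[OF integrable_phi[OF assms(1-3)] nn] by simp
  hence "AE t in N. phi t (Suc x) = 0"
  proof (rule eventually_mono)
    fix t assume "phi t x = 0"
    hence "(real x + 1) * phi t (Suc x) = 0" by (simp add: phi_shift[symmetric])
    thus "phi t (Suc x) = 0" by (simp add: add_nonneg_eq_0_iff)
  qed
  hence "pois_marg N (Suc x) = (\<integral>t. 0 \<partial>N)" unfolding pois_marg_phi by (rule integral_cong_AE[rotated 2]) (auto intro: meas_N[OF assms(2)])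
  thus ?thesis by simp
qed

lemma int_by_4:
  fixes N :: "real measure" and f :: "real \<Rightarrow> real"
  assumes "prob_space N" "integrable N (\<lambda>t. t^4)" "f \<in> borel_measurable N"
    "AE t in N. \<bar>f t\<bar> \<le> C * (1 + t^4)"
  shows "integrable N f"
proof (rule Bochner_Integration.integrable_bound[OF _ assms(3)])
  interpret prob_space N by fact
  show "integrable N (\<lambda>t. C * (1 + t^4))" using assms(2) by auto
  show "AE t in N. norm (f t) \<le> norm (C * (1 + t^4))" using assms(4) by (auto elim!: eventually_mono)
qed

lemma pow_le4: "0 \<le> (t::real) \<Longrightarrow> t \<le> 1 + t^4 \<and> t^2 \<le> 1 + t^4"
proof (cases "t \<le> 1")
  case True
  assume t: "0 \<le> t"
  have "t^2 \<le> 1" using True t by (simp add: power_le_one)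
  thus ?thesis using True t by (simp add: add_increasing2)
next
  case False
  assume t: "0 \<le> t"
  have a: "t^1 \<le> t^2" using False by (intro power_increasing) auto
  have b: "t^2 \<le> t^4" using False by (intro power_increasing) auto
  show ?thesis using a b by simp
qed

lemma bnd_w: "0 \<le> t \<Longrightarrow> 0 \<le> w \<Longrightarrow> w \<le> 1 \<Longrightarrow> \<bar>w * t^j * phi t x\<bar> \<le> t^j"
proof -
  assume a: "0 \<le> t" "0 \<le> w" "w \<le> 1"
  have "w * t^j * phi t x \<le> 1 * t^j * 1"
    by (intro mult_mono) (use a phi_le1 phi_nonneg in auto)
  moreover have "0 \<le> w * t^j * phi t x" using a phi_nonneg by auto
  ultimately show ?thesis by simp
qed

lemma amgm4:
  fixes l u :: real
  assumes "0 < l"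
  shows "u^2 \<le> (l + u^4 / l) / 2"
proof -
  have "2 * l * u^2 \<le> l^2 + u^4"
    using zero_le_square[of "l - u^2"] by (simp add: power2_eq_square power4_eq_xxxx algebra_simps)
  hence "u^2 * (2 * l) \<le> l * l + u^4" by (simp add: power2_eq_square mult_ac)
  hence "u^2 \<le> (l * l + u^4) / (2 * l)" using assms by (simp add: pos_le_divide_eq)
  also have "(l * l + u^4) / (2 * l) = (l + u^4 / l) / 2" using assms by (simp add: field_simps)
  finally show ?thesis .
qed

lemma tail_real:
  fixes I e M k :: real
  assumes "0 \<le> I" "I \<le> sqrt (e * M)" "0 \<le> e" "e \<le> 1" "1 \<le> M"
  shows "2 * I + 2 * (4 * I + (2 * k^2 + 1/4) * e) \<le> 2 * (1 + 6 * sqrt 15) * sqrt ((k^4 + M) * e)"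
proof -
  define R where "R = sqrt ((k^4 + M) * e)"
  have R0: "0 \<le> R" using assms by (simp add: R_def)
  have k4: "0 \<le> k^4" by (simp add: zero_le_even_power)
  have ee: "e^2 \<le> e" using assms by (simp add: power2_eq_square mult_le_cancel_right1 mult_left_le)
  have s1: "sqrt (e * M) \<le> R" unfolding R_def
    by (rule real_sqrt_le_mono) (use k4 assms in \<open>simp add: algebra_simps\<close>)
  have s2: "k^2 * e \<le> R"
  proof -
    have "k^2 * e = sqrt ((k^2 * e)^2)" using assms by simp
    also have "\<dots> \<le> R" unfolding R_def
    proof (rule real_sqrt_le_mono)
      have "(k^2 * e)^2 = k^4 * e^2" by (simp add: power_mult_distrib flip: power_mult)
      also have "\<dots> \<le> k^4 * e" by (rule mult_left_mono[OF ee k4])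
      also have "\<dots> \<le> (k^4 + M) * e" using assms by (simp add: algebra_simps)
      finally show "(k^2 * e)^2 \<le> (k^4 + M) * e" .
    qed
    finally show ?thesis .
  qed
  have s3: "e \<le> R"
  proof -
    have "e = sqrt (e^2)" using assms by simp
    also have "\<dots> \<le> R" unfolding R_def
    proof (rule real_sqrt_le_mono)
      have "M * e \<ge> 1 * e" using assms by (intro mult_right_mono) auto
      moreover have "0 \<le> k^4 * e" using k4 assms(3) by simp
      ultimately show "e^2 \<le> (k^4 + M) * e" using ee by (simp only: distrib_right)
    qed
    finally show ?thesis .
  qed
  have s4: "3 \<le> sqrt 15" by (rule real_le_rsqrt) simp
  have "38 * R \<le> 2 * (1 + 6 * sqrt 15) * R" using s4 R0 by (intro mult_right_mono) auto
  moreover have "2 * I + 2 * (4 * I + (2 * k^2 + 1/4) * e) = 10 * I + 4 * (k^2 * e) + e / 2"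
    by (simp add: algebra_simps)
  ultimately show ?thesis using s1 s2 s3 assms(2) R0 unfolding R_def by linarith
qed

lemma sqrt_diff_sq:
  fixes a b :: real
  assumes "0 \<le> a" "a \<le> b"
  shows "(sqrt a - sqrt b)^2 \<le> b - a"
proof -
  have "sqrt a * sqrt a \<le> sqrt a * sqrt b" using assms by (intro mult_left_mono) auto
  hence "a \<le> sqrt a * sqrt b" using assms by simp
  moreover have "(sqrt a - sqrt b)^2 = a + b - 2 * (sqrt a * sqrt b)"
    using assms by (simp add: power2_eq_square algebra_simps)
  ultimately show ?thesis by simp
qed

lemma split43:
  fixes u v :: real
  shows "(u + v)^2 \<le> 4 * u^2 + 4/3 * v^2"
proof -
  have "4 * u^2 + 4/3 * v^2 - (u + v)^2 = 3 * (u - v/3)^2" by (simp add: power2_eq_square algebra_simps)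
  thus ?thesis by (smt (verit) zero_le_power2)
qed

lemma ennreal_shift_le: "(\<Sum>n. (u::nat \<Rightarrow> ennreal) (Suc n)) \<le> (\<Sum>n. u n)"
proof -
  have "u sums ((\<Sum>n. u (Suc n)) + u 0)" by (rule sums_Suc[OF summable_sums]) simp
  hence "(\<Sum>n. u n) = (\<Sum>n. u (Suc n)) + u 0" by (simp add: sums_iff)
  thus ?thesis by simp
qed

lemma persp:
  fixes F S b :: real
  assumes "0 < F"
  shows "F * (S / F - b)^2 = (S - b * F)^2 / F"
  using assms by (simp add: field_simps power2_eq_square)

lemma sqrt_bound8:
  fixes a b :: real
  assumes "0 \<le> a" "0 \<le> b"
  shows "sqrt (8 * (a + b^2)) \<le> 2 * sqrt 2 * (b + sqrt a)"
proof -
  have s8: "sqrt 8 = 2 * sqrt 2"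
    by (metis mult.commute real_sqrt_four real_sqrt_mult numeral_times_numeral semiring_norm(12) semiring_norm(13))
  have "sqrt (a + b^2) \<le> sqrt a + sqrt (b^2)" using assms by (intro sqrt_add_le_add_sqrt) auto
  hence le: "sqrt (a + b^2) \<le> b + sqrt a" using assms by simp
  have "sqrt (8 * (a + b^2)) = sqrt 8 * sqrt (a + b^2)" by (simp only: real_sqrt_mult)
  also have "\<dots> \<le> sqrt 8 * (b + sqrt a)" by (rule mult_left_mono[OF le]) simp
  finally show ?thesis using s8 by simp
qed

theorem lemmaD2:
  fixes G :: "real measure" and \<Omega> :: "'w measure" and Ghat :: "'w \<Rightarrow> real measure"
    and M \<kappa> h K :: real
  assumes "prob_space G" and "sets G = sets borel" and "AE \<theta> in G. 0 \<le> \<theta>"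
    and "(\<integral>\<^sup>+\<theta>. ennreal (\<theta> ^ 4) \<partial>G) \<le> ennreal M" and "M \<ge> 1"
    and "prob_space \<Omega>"
    and "Ghat \<in> \<Omega> \<rightarrow>\<^sub>M subprob_algebra borel"
    and "\<forall>\<omega>\<in>space \<Omega>. prob_space (Ghat \<omega>) \<and> sets (Ghat \<omega>) = sets borel \<and> (AE \<theta> in Ghat \<omega>. 0 \<le> \<theta>)"
    and "\<kappa> > 0"
    and "AE \<omega> in \<Omega>. \<forall>x. pois_bayes (Ghat \<omega>) x \<le> real x + \<kappa>"
    and "h > 0" and "measure G {0..h} > 1/2" and "K \<ge> 1"
  shows "(\<integral>\<^sup>+\<omega>. (\<Sum>x. ennreal (pois_marg G x * (pois_bayes G x - pois_bayes (Ghat \<omega>) x)^2)) \<partial>\<Omega>)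
    \<le> ennreal (12 * (h^2 + (K + \<kappa>)^2) + 48 * (h + K + \<kappa>) * K)
        * ((\<integral>\<^sup>+\<omega>. ennreal (hellinger_sq (pois_marg G) (pois_marg (Ghat \<omega>))) \<partial>\<Omega>)
           + ennreal (4 * measure G {h<..}))
      + ennreal (2 * sqrt 2 * ((2*h + \<kappa>)^2 + sqrt (h + 3 * h^2)) * sqrt (rho K G)
           + 2 * (1 + 6 * sqrt 15) * sqrt ((\<kappa>^4 + M) * measure G {h<..}))"
proof -
  note G = assms(1-3)
  interpret G: prob_space G by fact
  have spG: "space G = UNIV" using sets_eq_imp_space_eq[OF assms(2)] by simp
  define eps where "eps = measure G {h<..}"
  define f where "f = pois_marg G"
  define F0 where "F0 x = (\<integral>t. indicator {..h} t * phi t x \<partial>G)" for x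
  define F1 where "F1 x = (\<integral>t. indicator {h<..} t * phi t x \<partial>G)" for x
  define Q1 where "Q1 x = (\<integral>t. indicator {h<..} t * t^2 * phi t x \<partial>G)" for x
  define I1 where "I1 = (\<integral>t. indicator {h<..} t * t^2 \<partial>G)"
  have eps01: "0 \<le> eps" "eps \<le> 1" by (auto simp: eps_def)
  have M0: "0 \<le> M" using assms(5) by simp

  have int4: "integrable G (\<lambda>t. t^4)"
  proof (rule integrableI_bounded)
    show "(\<lambda>t. t^4) \<in> borel_measurable G" by (rule meas_N[OF assms(2)]) measurable
    have "(\<integral>\<^sup>+t. ennreal (norm (t^4)) \<partial>G) = (\<integral>\<^sup>+t. ennreal (t^4) \<partial>G)"
      by (simp add: power_even_abs_numeral)
    also have "\<dots> < \<infinity>" using assms(4) by (simp add: le_less_trans)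
    finally show "(\<integral>\<^sup>+t. ennreal (norm (t^4)) \<partial>G) < \<infinity>" .
  qed
  have int4M: "(\<integral>t. t^4 \<partial>G) \<le> M"
  proof -
    have "ennreal (\<integral>t. t^4 \<partial>G) = (\<integral>\<^sup>+t. ennreal (t^4) \<partial>G)"
      by (rule nn_integral_eq_integral[symmetric, OF int4]) auto
    also have "\<dots> \<le> ennreal M" by (rule assms(4))
    finally show ?thesis using ennreal_le_iff[OF M0] by simp
  qed
  have intG: "integrable G g" if "g \<in> borel_measurable borel" "AE t in G. \<bar>g t\<bar> \<le> C * (1 + t^4)" for g C
    by (rule int_by_4[OF G(1) int4 meas_N[OF assms(2) that(1)] that(2)])
  have intW: "integrable G (\<lambda>t. indicator A t * t^j * phi t x)"
    if "A \<in> sets borel" "j \<le> 2" for A j x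
  proof (rule intG[of _ 1])
    show "(\<lambda>t. indicator A t * t ^ j * phi t x) \<in> borel_measurable borel" using that(1) by measurable
    show "AE t in G. \<bar>indicator A t * t ^ j * phi t x\<bar> \<le> 1 * (1 + t ^ 4)" using G(3)
    proof eventually_elim
      case (elim t)
      have "\<bar>indicator A t * t ^ j * phi t x\<bar> \<le> t^j" by (rule bnd_w) (use elim in \<open>auto simp: indicator_def\<close>)
      moreover have "t^j \<le> 1 + t^4"
      proof -
        have "j = 0 \<or> j = 1 \<or> j = 2" using that(2) by auto
        thus ?thesis using pow_le4[OF elim] by auto
      qed
      ultimately show ?case by simp
    qed
  qed
  have iF0: "integrable G (\<lambda>t. indicator {..h} t * phi t x)" for x
    using intW[of "{..h}" 0 x] by simp
  have iF1: "integrable G (\<lambda>t. indicator {h<..} t * phi t x)" for x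
    using intW[of "{h<..}" 0 x] by simp
  have iM0: "integrable G (\<lambda>t. indicator {..h} t * t * phi t x)" for x
    using intW[of "{..h}" 1 x] by simp
  have iM1: "integrable G (\<lambda>t. indicator {h<..} t * t * phi t x)" for x
    using intW[of "{h<..}" 1 x] by simp
  have iQ1: "integrable G (\<lambda>t. indicator {h<..} t * t^2 * phi t x)" for x
    using intW[of "{h<..}" 2 x] by simp
  have iI1: "integrable G (\<lambda>t. indicator {h<..} t * t^2)"
  proof (rule intG[of _ 1])
    show "(\<lambda>t. indicator {h<..} t * t^2) \<in> borel_measurable borel" by measurable
    show "AE t in G. \<bar>indicator {h<..} t * t^2\<bar> \<le> 1 * (1 + t ^ 4)" using G(3)
      by eventually_elim (use pow_le4 in \<open>auto simp: indicator_def\<close>)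
  qed
  have iind: "integrable G (indicator A :: real \<Rightarrow> real)" if "A \<in> sets borel" for A
    using that by (intro G.integrable_const_bound[where B=1]) (auto intro!: meas_N[OF assms(2)] simp: indicator_def)
  have iind0: "integrable G (indicator {..h} :: real \<Rightarrow> real)" by (rule iind) simp
  have iind1: "integrable G (indicator {h<..} :: real \<Rightarrow> real)" by (rule iind) simp

  have f_split: "f x = F0 x + F1 x" for x
  proof -
    have "f x = (\<integral>t. indicator {..h} t * phi t x + indicator {h<..} t * phi t x \<partial>G)"
      unfolding f_def pois_marg_phi
      by (intro Bochner_Integration.integral_cong) (auto simp: indicator_def)
    also have "\<dots> = F0 x + F1 x" unfolding F0_def F1_def by (rule Bochner_Integration.integral_add[OF iF0 iF1])
    finally show ?thesis .
  qed
  have F0nn: "0 \<le> F0 x" for x unfolding F0_def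
    by (rule integral_nonneg_AE) (use G(3) in \<open>auto elim!: eventually_mono intro!: mult_nonneg_nonneg phi_nonneg\<close>)
  have F1nn: "0 \<le> F1 x" for x unfolding F1_def
    by (rule integral_nonneg_AE) (use G(3) in \<open>auto elim!: eventually_mono intro!: mult_nonneg_nonneg phi_nonneg\<close>)
  have Q1nn: "0 \<le> Q1 x" for x unfolding Q1_def
    by (rule integral_nonneg_AE) (use G(3) in \<open>auto elim!: eventually_mono intro!: mult_nonneg_nonneg phi_nonneg\<close>)
  have shift: "(real x + 1) * (\<integral>t. indicator A t * phi t (Suc x) \<partial>G) = (\<integral>t. indicator A t * t * phi t x \<partial>G)" for A x
  proof -
    have "(real x + 1) * (\<integral>t. indicator A t * phi t (Suc x) \<partial>G) = (\<integral>t. (real x + 1) * (indicator A t * phi t (Suc x)) \<partial>G)"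
      by simp
    also have "\<dots> = (\<integral>t. indicator A t * t * phi t x \<partial>G)"
      by (intro Bochner_Integration.integral_cong refl) (simp add: phi_shift mult_ac)
    finally show ?thesis .
  qed
  have M0le: "0 \<le> (real x + 1) * F0 (Suc x) \<and> (real x + 1) * F0 (Suc x) \<le> h * F0 x" for x
  proof -
    have e: "(real x + 1) * F0 (Suc x) = (\<integral>t. indicator {..h} t * t * phi t x \<partial>G)"
      unfolding F0_def by (rule shift)
    have "0 \<le> (\<integral>t. indicator {..h} t * t * phi t x \<partial>G)"
      by (rule integral_nonneg_AE) (use G(3) in \<open>auto elim!: eventually_mono intro!: mult_nonneg_nonneg phi_nonneg\<close>)
    moreover have "(\<integral>t. indicator {..h} t * t * phi t x \<partial>G) \<le> (\<integral>t. h * (indicator {..h} t * phi t x) \<partial>G)"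
    proof (rule integral_mono_AE[OF iM0])
      show "integrable G (\<lambda>t. h * (indicator {..h} t * phi t x))" using iF0 by simp
      show "AE t in G. indicator {..h} t * t * phi t x \<le> h * (indicator {..h} t * phi t x)" using G(3)
      proof eventually_elim
        case (elim t)
        show ?case
        proof (cases "t \<le> h")
          case True
          thus ?thesis using mult_right_mono[OF True phi_nonneg[OF elim, of x]] by (simp add: indicator_def)
        qed (simp add: indicator_def)
      qed
    qed
    ultimately show ?thesis by (subst e)+ (simp add: F0_def)
  qed
  have M1cs: "((real x + 1) * F1 (Suc x))^2 \<le> F1 x * Q1 x" for x
  proof (rule cs_disc[OF F1nn])
    fix s
    have e: "(real x + 1) * F1 (Suc x) = (\<integral>t. indicator {h<..} t * t * phi t x \<partial>G)"
      unfolding F1_def by (rule shift)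
    have "0 \<le> (\<integral>t. indicator {h<..} t * (t - s)^2 * phi t x \<partial>G)"
      by (rule integral_nonneg_AE) (use G(3) in \<open>auto elim!: eventually_mono intro!: mult_nonneg_nonneg phi_nonneg\<close>)
    also have "(\<integral>t. indicator {h<..} t * (t - s)^2 * phi t x \<partial>G)
      = (\<integral>t. indicator {h<..} t * t^2 * phi t x - 2 * s * (indicator {h<..} t * t * phi t x) + s^2 * (indicator {h<..} t * phi t x) \<partial>G)"
      by (intro Bochner_Integration.integral_cong refl) (simp add: power2_eq_square algebra_simps)
    also have "\<dots> = Q1 x - 2 * s * (\<integral>t. indicator {h<..} t * t * phi t x \<partial>G) + s^2 * F1 x"
      unfolding Q1_def F1_def using iQ1 iM1 iF1
      by (simp add: Bochner_Integration.integral_add Bochner_Integration.integral_diff)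
    finally show "0 \<le> F1 x * s^2 - 2 * ((real x + 1) * F1 (Suc x)) * s + Q1 x"
      unfolding e by (simp add: algebra_simps)
  qed

  have Sf: "(\<Sum>x. ennreal (f x)) \<le> ennreal 1"
  proof -
    have "(\<Sum>x. ennreal ((\<lambda>_. 1) x * (\<integral>t. (\<lambda>_. 1) t * phi t x \<partial>G))) \<le> ennreal (\<integral>t. (\<lambda>_. 1) t * (\<lambda>_. 1::real) t \<partial>G)"
      by (rule swap_le[OF G]) (auto simp: integrable_phi[OF G] phi_sums[THEN sums_unique, symmetric] intro: sums_summable[OF phi_sums])
    thus ?thesis by (simp add: f_def pois_marg_phi G.prob_space)
  qed
  have fnn: "0 \<le> f x" for x using f_split F0nn F1nn by (simp add: add_nonneg_nonneg)
  have sumf: "summable f" using ennreal_sum_le_real(1)[OF Sf fnn] by simp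
  have SF1: "(\<Sum>x. ennreal (F1 x)) \<le> ennreal eps"
  proof -
    have "(\<Sum>x. ennreal ((\<lambda>_. 1) x * (\<integral>t. indicator {h<..} t * phi t x \<partial>G))) \<le> ennreal (\<integral>t. indicator {h<..} t * (\<lambda>_. 1::real) t \<partial>G)"
      by (rule swap_le[OF G]) (auto simp: iF1 iind1 phi_sums[THEN sums_unique, symmetric] intro: sums_summable[OF phi_sums])
    thus ?thesis by (simp add: F1_def eps_def spG)
  qed
  define W4 where "W4 = 8 * ((h + 3 * h^2) + ((2 * h + \<kappa>)^2)^2)"
  have W4pos: "0 < W4" using assms(11) by (simp add: W4_def add_pos_nonneg)
  have S4: "(\<Sum>x. ennreal ((real x + (\<kappa> + h))^4 * F0 x)) \<le> ennreal W4"
  proof -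
    have "(\<Sum>x. ennreal ((\<lambda>x. (real x + (\<kappa> + h))^4) x * (\<integral>t. indicator {..h} t * phi t x \<partial>G)))
        \<le> ennreal (\<integral>t. indicator {..h} t * (\<lambda>_. W4) t \<partial>G)"
    proof (rule swap_le[OF G])
      fix t :: real assume t: "0 \<le> t"
      show "summable (\<lambda>x. (real x + (\<kappa> + h)) ^ 4 * phi t x)"
        using phi_c4_bound(1)[OF t, of "\<kappa> + h"] assms(9,11) by simp
      show "indicator {..h} t * (\<Sum>x. (real x + (\<kappa> + h)) ^ 4 * phi t x) \<le> indicator {..h} t * W4"
      proof (cases "t \<le> h")
        case True
        have "(\<Sum>x. (real x + (\<kappa> + h)) ^ 4 * phi t x) \<le> 8 * (t + 3 * t^2 + (t + (\<kappa> + h))^4)"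
          using phi_c4_bound(2)[OF t, of "\<kappa> + h"] assms(9,11) by simp
        also have "\<dots> \<le> W4"
        proof -
          have "t^2 \<le> h^2" using True t by (intro power_mono) auto
          moreover have "(t + (\<kappa> + h))^4 \<le> (2 * h + \<kappa>)^4" using True t assms(9) by (intro power_mono) auto
          moreover have "((2 * h + \<kappa>)^2)^2 = (2 * h + \<kappa>)^4" by (simp flip: power_mult)
          ultimately have "t + 3 * t^2 + (t + (\<kappa> + h))^4 \<le> h + 3 * h^2 + ((2 * h + \<kappa>)^2)^2"
            using True by (intro add_mono) auto
          thus ?thesis unfolding W4_def by simp
        qed
        finally show ?thesis using True by (simp add: indicator_def)
      qed (simp add: indicator_def)
    qed (auto simp: iF0 iind0 W4pos less_imp_le)
    also have "(\<integral>t. indicator {..h} t * (\<lambda>_. W4) t \<partial>G) \<le> W4"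
    proof -
      have "(\<integral>t. indicator {..h} t * (\<lambda>_. W4) t \<partial>G) = W4 * measure G {..h}"
        by (simp add: spG mult.commute)
      also have "\<dots> \<le> W4 * 1" using W4pos by (intro mult_left_mono) auto
      finally show ?thesis by simp
    qed
    finally show ?thesis unfolding F0_def by (simp add: ennreal_leI)
  qed
  have SQ1: "(\<Sum>x. ennreal (Q1 x)) \<le> ennreal I1"
  proof -
    have "(\<Sum>x. ennreal ((\<lambda>_. 1) x * (\<integral>t. (\<lambda>t. indicator {h<..} t * t^2) t * phi t x \<partial>G)))
        \<le> ennreal (\<integral>t. (\<lambda>t. indicator {h<..} t * t^2) t * (\<lambda>_. 1::real) t \<partial>G)"
      by (rule swap_le[OF G]) (auto simp: iQ1 iI1 phi_sums[THEN sums_unique, symmetric] intro: sums_summable[OF phi_sums])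
    thus ?thesis by (simp add: Q1_def I1_def)
  qed
  have Ssq: "(\<Sum>x. ennreal ((real x + \<kappa>)^2 * F1 x)) \<le> ennreal (4 * I1 + (2 * \<kappa>^2 + 1/4) * eps)"
  proof -
    have iB: "integrable G (\<lambda>t. 4 * (indicator {h<..} t * t^2) + (2 * \<kappa>^2 + 1/4) * indicator {h<..} t)"
      using iI1 iind1 by auto
    have "(\<Sum>x. ennreal ((\<lambda>x. (real x + \<kappa>)^2) x * (\<integral>t. indicator {h<..} t * phi t x \<partial>G)))
        \<le> ennreal (\<integral>t. indicator {h<..} t * (\<lambda>t. 4 * t^2 + 2 * \<kappa>^2 + 1/4) t \<partial>G)"
    proof (rule swap_le[OF G])
      show "integrable G (\<lambda>t. indicator {h<..} t * (4 * t^2 + 2 * \<kappa>^2 + 1/4))"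
        using iB by (simp add: algebra_simps)
    next
      fix t :: real assume t: "0 \<le> t"
      show "summable (\<lambda>x. (real x + \<kappa>) ^ 2 * phi t x)"
        using phi_sq_bound(1)[OF t, of "\<kappa>"] assms(9) by simp
      show "indicator {h<..} t * (\<Sum>x. (real x + \<kappa>) ^ 2 * phi t x) \<le> indicator {h<..} t * (4 * t^2 + 2 * \<kappa>^2 + 1/4)"
        using phi_sq_bound(2)[OF t, of "\<kappa>"] assms(9) by (simp add: indicator_def)
    qed (auto simp: iF1)
    also have "(\<integral>t. indicator {h<..} t * (\<lambda>t. 4 * t^2 + 2 * \<kappa>^2 + 1/4) t \<partial>G) = 4 * I1 + (2 * \<kappa>^2 + 1/4) * eps"
    proof -
      have "(\<integral>t. indicator {h<..} t * (\<lambda>t. 4 * t^2 + 2 * \<kappa>^2 + 1/4) t \<partial>G)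
          = (\<integral>t. 4 * (indicator {h<..} t * t^2) + (2 * \<kappa>^2 + 1/4) * indicator {h<..} t \<partial>G)"
        by (intro Bochner_Integration.integral_cong refl) (simp add: algebra_simps)
      also have "\<dots> = 4 * I1 + (2 * \<kappa>^2 + 1/4) * eps"
        using iI1 iind1 by (simp add: Bochner_Integration.integral_add I1_def eps_def spG)
      finally show ?thesis .
    qed
    finally show ?thesis unfolding F1_def by simp
  qed
  have I1le: "I1 \<le> sqrt (eps * M)"
  proof (rule opt_lambda[OF eps01(1)])
    show "0 < M" using assms(5) by simp
    fix l :: real assume l: "0 < l"
    have "I1 \<le> (\<integral>t. (l * indicator {h<..} t + t^4 / l) / 2 \<partial>G)"
      unfolding I1_def
    proof (rule integral_mono[OF iI1])
      show "integrable G (\<lambda>t. (l * indicator {h<..} t + t^4 / l) / 2)"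
        using iind1 int4 by auto
      fix t :: real
      show "indicator {h<..} t * t^2 \<le> (l * indicator {h<..} t + t^4 / l) / 2"
        using amgm4[OF l, of t] l by (auto simp: indicator_def)
    qed
    also have "\<dots> = (l * eps + (\<integral>t. t^4 \<partial>G) / l) / 2"
      using iind1 int4 by (simp add: Bochner_Integration.integral_add eps_def spG)
    also have "\<dots> \<le> (l * eps + M / l) / 2"
      using int4M l by (simp add: divide_right_mono)
    finally show "I1 \<le> (l * eps + M / l) / 2" .
  qed

  define rr where "rr x = (if K \<le> real x then f x else 0)" for x
  define Tb where "Tb x = (if K \<le> real x then (real x + \<kappa> + h)^2 * F0 x else 0)" for x
  define Tt where "Tt x = 2 * Q1 x + 2 * (real x + \<kappa>)^2 * F1 x" for x
  define Rterm where "Rterm = 2 * sqrt 2 * ((2*h + \<kappa>)^2 + sqrt (h + 3 * h^2)) * sqrt (rho K G)"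
  define Tterm where "Tterm = 2 * (1 + 6 * sqrt 15) * sqrt ((\<kappa>^4 + M) * eps)"
  have rho_eq: "rho K G = suminf rr" unfolding rho_def rr_def[abs_def] f_def by (rule refl)
  have rrnn: "0 \<le> rr x" for x using fnn by (simp add: rr_def)
  have sumrr: "summable rr"
    by (rule summable_comparison_test[OF _ sumf]) (auto simp: rr_def fnn)
  have rho0: "0 \<le> rho K G" unfolding rho_eq using sumrr rrnn by (rule suminf_nonneg)
  have F0f: "F0 x \<le> f x" for x using f_split F1nn by (simp add: add_increasing2)
  have Tbnn: "0 \<le> Tb x" for x using F0nn by (simp add: Tb_def)
  have STb: "(\<Sum>x. ennreal (Tb x)) \<le> ennreal Rterm"
  proof -
    have bnd: "(\<Sum>x. ennreal (Tb x)) \<le> ennreal ((l * rho K G + W4 / l) / 2)" if l: "0 < l" for l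
    proof -
      have pw: "Tb x \<le> l / 2 * rr x + 1 / (2 * l) * ((real x + (\<kappa> + h))^4 * F0 x)" for x
      proof (cases "K \<le> real x")
        case True
        have "(real x + (\<kappa> + h))^2 * F0 x \<le> (l + (real x + (\<kappa> + h))^4 / l) / 2 * F0 x"
          by (rule mult_right_mono[OF amgm4[OF l] F0nn])
        also have "\<dots> = l / 2 * F0 x + 1 / (2 * l) * ((real x + (\<kappa> + h))^4 * F0 x)"
          using l by (simp add: field_simps)
        also have "\<dots> \<le> l / 2 * f x + 1 / (2 * l) * ((real x + (\<kappa> + h))^4 * F0 x)"
          using F0f l by simp
        finally show ?thesis using True by (simp add: Tb_def rr_def add.assoc)
      next
        case False
        have "0 \<le> (real x + (\<kappa> + h))^4 * F0 x" using F0nn assms(9,11) by simp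
        then show ?thesis using False l by (simp add: Tb_def rr_def)
      qed
      have "(\<Sum>x. ennreal (Tb x)) \<le> (\<Sum>x. ennreal (l / 2) * ennreal (rr x) + ennreal (1 / (2 * l)) * ennreal ((real x + (\<kappa> + h))^4 * F0 x))"
      proof (intro suminf_le summableI)
        fix x
        have "ennreal (Tb x) \<le> ennreal (l / 2 * rr x + 1 / (2 * l) * ((real x + (\<kappa> + h))^4 * F0 x))"
          using pw by (rule ennreal_leI)
        also have "\<dots> = ennreal (l / 2 * rr x) + ennreal (1 / (2 * l) * ((real x + (\<kappa> + h))^4 * F0 x))"
          by (rule ennreal_plus) (use l rrnn F0nn assms(9,11) in auto)
        also have "\<dots> = ennreal (l / 2) * ennreal (rr x) + ennreal (1 / (2 * l)) * ennreal ((real x + (\<kappa> + h))^4 * F0 x)"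
          by (subst (1 2) ennreal_mult') (use l in auto)
        finally show "ennreal (Tb x) \<le> \<dots>" .
      qed
      also have "\<dots> = ennreal (l / 2) * (\<Sum>x. ennreal (rr x)) + ennreal (1 / (2 * l)) * (\<Sum>x. ennreal ((real x + (\<kappa> + h))^4 * F0 x))"
        by (simp only: suminf_add[OF summableI summableI, symmetric] ennreal_suminf_cmult)
      also have "\<dots> \<le> ennreal (l / 2) * ennreal (rho K G) + ennreal (1 / (2 * l)) * ennreal W4"
        using S4 suminf_ennreal2[OF rrnn sumrr] rho_eq by (intro add_mono mult_left_mono) auto
      also have "\<dots> = ennreal ((l * rho K G + W4 / l) / 2)"
        using l rho0 W4pos by (simp add: ennreal_plus[symmetric] ennreal_mult[symmetric] field_simps del: ennreal_plus)
      finally show ?thesis .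
    qed
    have c0: "0 \<le> (l * rho K G + W4 / l) / 2" if "0 < l" for l
      using that rho0 W4pos by (simp add: add_nonneg_nonneg)
    have sTb: "summable Tb" using ennreal_sum_le_real(1)[OF bnd[of 1] Tbnn c0[of 1]] by simp
    have "suminf Tb \<le> sqrt (rho K G * W4)"
      by (rule opt_lambda[OF rho0 W4pos]) (use ennreal_sum_le_real(2)[OF bnd Tbnn c0] in auto)
    also have "\<dots> \<le> Rterm"
    proof -
      have "sqrt W4 \<le> 2 * sqrt 2 * ((2*h + \<kappa>)^2 + sqrt (h + 3 * h^2))"
        unfolding W4_def by (rule sqrt_bound8) (use assms(11) in auto)
      hence "sqrt (rho K G) * sqrt W4 \<le> sqrt (rho K G) * (2 * sqrt 2 * ((2*h + \<kappa>)^2 + sqrt (h + 3 * h^2)))"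
        by (rule mult_left_mono) (simp add: rho0)
      thus ?thesis by (simp add: Rterm_def real_sqrt_mult mult_ac)
    qed
    finally have "suminf Tb \<le> Rterm" .
    thus ?thesis using suminf_ennreal2[OF Tbnn sTb] by (simp add: ennreal_leI)
  qed
  have I1nn: "0 \<le> I1" unfolding I1_def by (rule integral_nonneg_AE) (auto simp: indicator_def)
  have Ttnn: "0 \<le> Tt x" for x using Q1nn F1nn by (simp add: Tt_def)
  have STt: "(\<Sum>x. ennreal (Tt x)) \<le> ennreal Tterm"
  proof -
    have "(\<Sum>x. ennreal (Tt x)) = (\<Sum>x. ennreal 2 * ennreal (Q1 x) + ennreal 2 * ennreal ((real x + \<kappa>)^2 * F1 x))"
    proof (intro suminf_cong)
      fix x
      have a: "0 \<le> 2 * Q1 x" "0 \<le> 2 * ((real x + \<kappa>)^2 * F1 x)" using Q1nn F1nn by auto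
      have "ennreal (Tt x) = ennreal (2 * Q1 x) + ennreal (2 * ((real x + \<kappa>)^2 * F1 x))"
        unfolding Tt_def mult.assoc by (rule ennreal_plus[OF a])
      also have "\<dots> = ennreal 2 * ennreal (Q1 x) + ennreal 2 * ennreal ((real x + \<kappa>)^2 * F1 x)"
        by (simp only: ennreal_mult'[OF zero_le_numeral])
      finally show "ennreal (Tt x) = \<dots>" .
    qed
    also have "\<dots> = ennreal 2 * (\<Sum>x. ennreal (Q1 x)) + ennreal 2 * (\<Sum>x. ennreal ((real x + \<kappa>)^2 * F1 x))"
      by (simp only: suminf_add[OF summableI summableI, symmetric] ennreal_suminf_cmult)
    also have "\<dots> \<le> ennreal 2 * ennreal I1 + ennreal 2 * ennreal (4 * I1 + (2 * \<kappa>^2 + 1/4) * eps)"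
      using SQ1 Ssq by (intro add_mono mult_left_mono) auto
    also have "\<dots> = ennreal (2 * I1 + 2 * (4 * I1 + (2 * \<kappa>^2 + 1/4) * eps))"
    proof -
      have X0: "0 \<le> 4 * I1 + (2 * \<kappa>^2 + 1/4) * eps" using I1nn eps01 by simp
      have "ennreal (2 * I1 + 2 * (4 * I1 + (2 * \<kappa>^2 + 1/4) * eps))
          = ennreal (2 * I1) + ennreal (2 * (4 * I1 + (2 * \<kappa>^2 + 1/4) * eps))"
        by (rule ennreal_plus) (use I1nn X0 in auto)
      also have "\<dots> = ennreal 2 * ennreal I1 + ennreal 2 * ennreal (4 * I1 + (2 * \<kappa>^2 + 1/4) * eps)"
        by (simp only: ennreal_mult'[OF zero_le_numeral])
      finally show ?thesis by (rule sym)
    qed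
    also have "\<dots> \<le> ennreal Tterm"
      unfolding Tterm_def by (rule ennreal_leI, rule tail_real[OF I1nn I1le eps01 assms(5)])
    finally show ?thesis .
  qed

  define X where "X = h^2 + (K + \<kappa>)^2"
  define Y where "Y = (h + K + \<kappa>) * K"
  define C where "C = 12 * (h^2 + (K + \<kappa>)^2) + 48 * (h + K + \<kappa>) * K"
  define A1 where "A1 = 12 * (h + K + \<kappa>) * K"
  define A2 where "A2 = 9/2 * (h^2 + (K + \<kappa>)^2)"
  have X0: "0 \<le> X" and Y0: "0 \<le> Y" using assms(9,11,13) by (auto simp: X_def Y_def)
  have CXY: "C = 12 * X + 48 * Y" "A1 = 12 * Y" "A2 = 9/2 * X"
    by (simp_all add: C_def X_def Y_def A1_def A2_def mult.assoc)
  have C0: "0 \<le> C" and A10: "0 \<le> A1" and A20: "0 \<le> A2" using X0 Y0 CXY by auto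
  have CA: "(A1 + A2) * (8/3 * H + 4 * eps) \<le> C * (H + 4 * eps)" if H: "0 \<le> H" for H
  proof -
    have "0 \<le> Y * H" "0 \<le> X * eps" "0 \<le> Y * eps" "0 \<le> X * H" using X0 Y0 H eps01 by auto
    thus ?thesis unfolding CXY by (simp add: algebra_simps)
  qed

  have Hmeas: "(\<lambda>\<omega>. hellinger_sq f (pois_marg (Ghat \<omega>))) \<in> borel_measurable \<Omega>"
  proof -
    have [measurable]: "(\<lambda>\<omega>. pois_marg (Ghat \<omega>) x) \<in> borel_measurable \<Omega>" for x
    proof -
      have "(\<lambda>N. integral\<^sup>L N (\<lambda>t. phi t x)) \<in> subprob_algebra borel \<rightarrow>\<^sub>M borel"
        by (rule integral_measurable_subprob_algebra) measurable
      from measurable_compose[OF assms(7) this] show ?thesis by (simp add: pois_marg_phi)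
    qed
    show ?thesis unfolding hellinger_sq_def by measurable
  qed

  have main_pw: "AE \<omega> in \<Omega>. (\<Sum>x. ennreal (f x * (pois_bayes G x - pois_bayes (Ghat \<omega>) x)^2))
      \<le> ennreal C * ennreal (hellinger_sq f (pois_marg (Ghat \<omega>))) + ennreal (C * (4 * eps) + Rterm + Tterm)"
    using assms(10) AE_space
  proof eventually_elim
    case (elim \<omega>)
    have NG: "prob_space (Ghat \<omega>)" "sets (Ghat \<omega>) = sets borel" "AE t in Ghat \<omega>. 0 \<le> t"
      using assms(8) elim(2) by auto
    interpret NGP: prob_space "Ghat \<omega>" by (rule NG(1))
    define g where "g = pois_marg (Ghat \<omega>)"
    define b where "b = pois_bayes (Ghat \<omega>)"
    define H where "H = hellinger_sq f g"
    have gnn: "0 \<le> g x" for x unfolding g_def pois_marg_phi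
      by (rule integral_nonneg_AE) (use NG(3) in \<open>auto elim!: eventually_mono intro!: phi_nonneg\<close>)
    have Sg: "(\<Sum>x. ennreal (g x)) \<le> ennreal 1"
    proof -
      have "(\<Sum>x. ennreal ((\<lambda>_. 1) x * (\<integral>t. (\<lambda>_. 1) t * phi t x \<partial>Ghat \<omega>))) \<le> ennreal (\<integral>t. (\<lambda>_. 1) t * (\<lambda>_. 1::real) t \<partial>Ghat \<omega>)"
        by (rule swap_le[OF NG]) (auto simp: integrable_phi[OF NG] phi_sums[THEN sums_unique, symmetric] intro: sums_summable[OF phi_sums])
      thus ?thesis using prob_space.prob_space[OF NG(1)] by (simp add: g_def pois_marg_phi)
    qed
    have sumg: "summable g" using ennreal_sum_le_real(1)[OF Sg gnn] by simp
    have bnn: "0 \<le> b x" for x using gnn by (simp add: b_def pois_bayes_def g_def[symmetric])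
    have ble: "b x \<le> real x + \<kappa>" for x using elim(1) by (simp add: b_def)
    have bg: "(real x + 1) * g (Suc x) = b x * g x" for x
    proof (cases "g x = 0")
      case True
      hence "g (Suc x) = 0" unfolding g_def by (rule marg_zero_Suc[OF NG])
      thus ?thesis using True by simp
    next
      case False
      thus ?thesis by (simp add: b_def pois_bayes_def g_def[symmetric])
    qed
    define D where "D y = sqrt (F0 y) - sqrt (g y)" for y
    define Ts where "Ts x = (if real x < K then A1 * (D (Suc x))^2 + A2 * (D x)^2 else 0)" for x
    have Tsnn: "0 \<le> Ts x" for x using A10 A20 by (simp add: Ts_def)
    have pw: "f x * (pois_bayes G x - b x)^2 \<le> Ts x + Tb x + Tt x" for x
    proof (cases "f x = 0")
      case True
      thus ?thesis using Tsnn[of x] Tbnn[of x] Ttnn[of x] by simp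
    next
      case False
      hence fpos: "0 < f x" using fnn[of x] by simp
      define m0 where "m0 = (real x + 1) * F0 (Suc x)"
      define m1 where "m1 = (real x + 1) * F1 (Suc x)"
      have aeq: "pois_bayes G x = (m0 + m1) / f x"
        by (simp add: pois_bayes_def f_def[symmetric] m0_def m1_def f_split algebra_simps)
      have "f x * (pois_bayes G x - b x)^2 = ((m0 + m1) - b x * f x)^2 / f x"
        unfolding aeq by (rule persp[OF fpos])
      also have "((m0 + m1) - b x * f x)^2 / f x = ((m0 - b x * F0 x) + (m1 - b x * F1 x))^2 / (F0 x + F1 x)"
      proof -
        have e1: "(m0 + m1) - b x * (F0 x + F1 x) = (m0 - b x * F0 x) + (m1 - b x * F1 x)"
          by (simp add: algebra_simps)
        show ?thesis by (simp only: f_split e1)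
      qed
      also have "\<dots> \<le> (m0 - b x * F0 x)^2 / F0 x + (m1 - b x * F1 x)^2 / F1 x"
      proof (rule titu[OF F0nn F1nn])
        assume "F0 x = 0" thus "m0 - b x * F0 x = 0" using M0le[of x] unfolding m0_def[symmetric] by simp
      next
        assume "F1 x = 0" thus "m1 - b x * F1 x = 0" using M1cs[of x] unfolding m1_def[symmetric] by simp
      qed
      also have "(m1 - b x * F1 x)^2 / F1 x \<le> Tt x"
      proof -
        have "(m1 - b x * F1 x)^2 / F1 x \<le> 2 * Q1 x + 2 * (b x)^2 * F1 x"
          by (rule core_tail[OF F1nn _ Q1nn]) (use M1cs[of x] in \<open>simp add: m1_def[symmetric]\<close>)
        also have "\<dots> \<le> 2 * Q1 x + 2 * (real x + \<kappa>)^2 * F1 x"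
        proof -
          have "(b x)^2 \<le> (real x + \<kappa>)^2" using bnn ble by (intro power_mono) auto
          thus ?thesis using F1nn[of x] by (simp add: mult_right_mono)
        qed
        finally show ?thesis by (simp add: Tt_def)
      qed
      also have "(m0 - b x * F0 x)^2 / F0 x \<le> Ts x + Tb x"
      proof (cases "real x < K")
        case True
        have "(m0 - b x * F0 x)^2 / F0 x \<le> 2 * (m0 / F0 x + b x) *
           (3 * (real x + 1) * (sqrt (F0 (Suc x)) - sqrt (g (Suc x)))^2 + 3/2 * b x * (sqrt (F0 x) - sqrt (g x))^2)"
          by (rule core_small[OF F0nn[of x] F0nn[of "Suc x"] gnn[of x] gnn[of "Suc x"] bnn[of x] _ bg[of x] m0_def])
             (use M0le[of x] in \<open>auto simp: m0_def[symmetric]\<close>)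
        also have "\<dots> \<le> A1 * (D (Suc x))^2 + A2 * (D x)^2"
        proof -
          have al: "0 \<le> m0 / F0 x" "m0 / F0 x \<le> h"
            using M0le[of x] F0nn[of x] assms(11) unfolding m0_def[symmetric] by (auto simp: divide_le_eq)
          show ?thesis unfolding A1_def A2_def D_def
            by (rule small_coef[OF al bnn ble True _ assms(13)]) simp_all
        qed
        finally show ?thesis using True by (simp add: Ts_def Tb_def)
      next
        case False
        have "(m0 - b x * F0 x)^2 / F0 x \<le> (real x + \<kappa> + h)^2 * F0 x"
          by (rule core_big[OF _ _ F0nn bnn ble]) (use M0le[of x] assms(11) in \<open>auto simp: m0_def[symmetric]\<close>)
        thus ?thesis using False by (simp add: Ts_def Tb_def)
      qed
      finally show ?thesis by simp
    qed
    have sumsq: "summable (\<lambda>y. (sqrt (f y) - sqrt (g y))^2)"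
    proof (rule summable_comparison_test[OF _ summable_add[OF sumf sumg]])
      show "\<exists>N. \<forall>n\<ge>N. norm ((sqrt (f n) - sqrt (g n))^2) \<le> f n + g n"
      proof (intro exI allI impI)
        fix n :: nat
        have "norm ((sqrt (f n) - sqrt (g n))^2) = (sqrt (f n) - sqrt (g n))^2" by simp
        also have "\<dots> = f n + g n - 2 * (sqrt (f n) * sqrt (g n))"
          using fnn[of n] gnn[of n] by (simp add: power2_eq_square algebra_simps)
        also have "\<dots> \<le> f n + g n" using fnn[of n] gnn[of n] by simp
        finally show "norm ((sqrt (f n) - sqrt (g n))^2) \<le> f n + g n" .
      qed
    qed
    have H0: "0 \<le> H" unfolding H_def hellinger_sq_def using sumsq by (simp add: suminf_nonneg)
    have c43: "(0::real) \<le> 4/3" by simp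
    have SD: "(\<Sum>y. ennreal ((D y)^2)) \<le> ennreal (8/3 * H + 4 * eps)"
    proof -
      have "(\<Sum>y. ennreal ((D y)^2)) \<le> (\<Sum>y. ennreal (4/3) * ennreal ((sqrt (f y) - sqrt (g y))^2) + ennreal 4 * ennreal (F1 y))"
      proof (intro suminf_le summableI)
        fix y
        have "(D y)^2 \<le> 4 * (sqrt (F0 y) - sqrt (f y))^2 + 4/3 * (sqrt (f y) - sqrt (g y))^2"
          using split43[of "sqrt (F0 y) - sqrt (f y)" "sqrt (f y) - sqrt (g y)"] by (simp add: D_def)
        also have "\<dots> \<le> 4 * F1 y + 4/3 * (sqrt (f y) - sqrt (g y))^2"
          using sqrt_diff_sq[OF F0nn F0f, of y] f_split[of y] by simp
        finally have "ennreal ((D y)^2) \<le> ennreal (4/3 * (sqrt (f y) - sqrt (g y))^2 + 4 * F1 y)"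
          by (intro ennreal_leI) simp
        also have "\<dots> = ennreal (4/3 * (sqrt (f y) - sqrt (g y))^2) + ennreal (4 * F1 y)"
          by (rule ennreal_plus) (use F1nn[of y] in auto)
        also have "\<dots> = ennreal (4/3) * ennreal ((sqrt (f y) - sqrt (g y))^2) + ennreal 4 * ennreal (F1 y)"
          by (simp only: ennreal_mult'[OF c43] ennreal_mult'[OF zero_le_numeral])
        finally show "ennreal ((D y)^2) \<le> \<dots>" .
      qed
      also have "\<dots> = ennreal (4/3) * (\<Sum>y. ennreal ((sqrt (f y) - sqrt (g y))^2)) + ennreal 4 * (\<Sum>y. ennreal (F1 y))"
        by (simp only: suminf_add[OF summableI summableI, symmetric] ennreal_suminf_cmult)
      also have "(\<Sum>y. ennreal ((sqrt (f y) - sqrt (g y))^2)) = ennreal (2 * H)"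
      proof -
        have "(\<Sum>y. ennreal ((sqrt (f y) - sqrt (g y))^2)) = ennreal (\<Sum>y. (sqrt (f y) - sqrt (g y))^2)"
          by (rule suminf_ennreal2[OF _ sumsq]) simp
        also have "(\<Sum>y. (sqrt (f y) - sqrt (g y))^2) = 2 * H" unfolding H_def hellinger_sq_def by simp
        finally show ?thesis .
      qed
      also have "ennreal (4/3) * ennreal (2 * H) + ennreal 4 * (\<Sum>y. ennreal (F1 y)) \<le> ennreal (4/3) * ennreal (2 * H) + ennreal 4 * ennreal eps"
        using SF1 by (intro add_mono mult_left_mono) auto
      also have "\<dots> = ennreal (8/3 * H + 4 * eps)"
      proof -
        have "ennreal (8/3 * H + 4 * eps) = ennreal (4/3 * (2 * H) + 4 * eps)" by simp
        also have "\<dots> = ennreal (4/3 * (2 * H)) + ennreal (4 * eps)"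
          by (rule ennreal_plus) (use H0 eps01 in auto)
        also have "\<dots> = ennreal (4/3) * ennreal (2 * H) + ennreal 4 * ennreal eps"
          by (simp only: ennreal_mult'[OF c43] ennreal_mult'[OF zero_le_numeral])
        finally show ?thesis by (rule sym)
      qed
      finally show ?thesis .
    qed
    have STs: "(\<Sum>x. ennreal (Ts x)) \<le> ennreal C * ennreal H + ennreal (C * (4 * eps))"
    proof -
      have "(\<Sum>x. ennreal (Ts x)) \<le> (\<Sum>x. ennreal A1 * ennreal ((D (Suc x))^2) + ennreal A2 * ennreal ((D x)^2))"
      proof (intro suminf_le summableI)
        fix x
        have "ennreal (Ts x) \<le> ennreal (A1 * (D (Suc x))^2 + A2 * (D x)^2)"
          using A10 A20 by (intro ennreal_leI) (simp add: Ts_def)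
        also have "\<dots> = ennreal (A1 * (D (Suc x))^2) + ennreal (A2 * (D x)^2)"
          by (rule ennreal_plus) (use A10 A20 in auto)
        also have "\<dots> = ennreal A1 * ennreal ((D (Suc x))^2) + ennreal A2 * ennreal ((D x)^2)"
          by (simp only: ennreal_mult'[OF A10] ennreal_mult'[OF A20])
        finally show "ennreal (Ts x) \<le> \<dots>" .
      qed
      also have "\<dots> = ennreal A1 * (\<Sum>x. ennreal ((D (Suc x))^2)) + ennreal A2 * (\<Sum>x. ennreal ((D x)^2))"
        by (simp only: suminf_add[OF summableI summableI, symmetric] ennreal_suminf_cmult)
      also have "\<dots> \<le> ennreal A1 * (\<Sum>x. ennreal ((D x)^2)) + ennreal A2 * (\<Sum>x. ennreal ((D x)^2))"
        by (intro add_mono mult_left_mono ennreal_shift_le) auto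
      also have "\<dots> = ennreal (A1 + A2) * (\<Sum>x. ennreal ((D x)^2))"
        by (simp only: ennreal_plus[OF A10 A20] distrib_right)
      also have "\<dots> \<le> ennreal (A1 + A2) * ennreal (8/3 * H + 4 * eps)"
        by (intro mult_left_mono SD) auto
      also have "\<dots> = ennreal ((A1 + A2) * (8/3 * H + 4 * eps))"
        by (simp only: ennreal_mult'[OF add_nonneg_nonneg[OF A10 A20]])
      also have "\<dots> \<le> ennreal (C * (H + 4 * eps))" by (intro ennreal_leI CA H0)
      also have "\<dots> = ennreal C * ennreal H + ennreal (C * (4 * eps))"
      proof -
        have "C * (H + 4 * eps) = C * H + C * (4 * eps)" by (simp add: distrib_left)
        hence "ennreal (C * (H + 4 * eps)) = ennreal (C * H) + ennreal (C * (4 * eps))"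
          using C0 H0 eps01 by (simp del: ennreal_plus add: ennreal_plus[symmetric])
        also have "ennreal (C * H) = ennreal C * ennreal H" by (rule ennreal_mult'[OF C0])
        finally show ?thesis .
      qed
      finally show ?thesis .
    qed
    have "(\<Sum>x. ennreal (f x * (pois_bayes G x - b x)^2)) \<le> (\<Sum>x. ennreal (Ts x) + ennreal (Tb x) + ennreal (Tt x))"
    proof (intro suminf_le summableI)
      fix x
      have "ennreal (f x * (pois_bayes G x - b x)^2) \<le> ennreal (Ts x + Tb x + Tt x)"
        by (rule ennreal_leI[OF pw])
      also have "\<dots> = ennreal (Ts x) + ennreal (Tb x) + ennreal (Tt x)"
        by (simp only: ennreal_plus[OF add_nonneg_nonneg[OF Tsnn Tbnn] Ttnn] ennreal_plus[OF Tsnn Tbnn])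
      finally show "ennreal (f x * (pois_bayes G x - b x)^2) \<le> \<dots>" .
    qed
    also have "\<dots> = (\<Sum>x. ennreal (Ts x)) + (\<Sum>x. ennreal (Tb x)) + (\<Sum>x. ennreal (Tt x))"
      by (simp only: suminf_add[OF summableI summableI, symmetric] ennreal_suminf_cmult)
    also have "\<dots> \<le> (ennreal C * ennreal H + ennreal (C * (4 * eps))) + ennreal Rterm + ennreal Tterm"
      by (intro add_mono STs STb STt)
    also have "\<dots> = ennreal C * ennreal H + ennreal (C * (4 * eps) + Rterm + Tterm)"
    proof -
      have "0 \<le> Rterm" using rho0 assms(9,11) by (simp add: Rterm_def)
      moreover have "0 \<le> Tterm" using eps01 M0 by (simp add: Tterm_def)
      moreover have "0 \<le> C * (4 * eps)" using C0 eps01 by simp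
      ultimately have "ennreal (C * (4 * eps) + Rterm + Tterm) = ennreal (C * (4 * eps)) + ennreal Rterm + ennreal Tterm"
        by (simp only: ennreal_plus add_nonneg_nonneg)
      thus ?thesis by (simp only: ac_simps)
    qed
    finally show ?case by (simp add: b_def H_def g_def)
  qed

  interpret Om: prob_space \<Omega> by (rule assms(6))
  have R0: "0 \<le> Rterm" using rho0 assms(9,11) by (simp add: Rterm_def)
  have T0: "0 \<le> Tterm" using eps01 M0 by (simp add: Tterm_def)
  have CE0: "0 \<le> C * (4 * eps)" using C0 eps01 by simp
  have m2: "(\<lambda>\<omega>. ennreal (hellinger_sq f (pois_marg (Ghat \<omega>)))) \<in> borel_measurable \<Omega>"
    using Hmeas by measurable
  have m1: "(\<lambda>\<omega>. ennreal C * ennreal (hellinger_sq f (pois_marg (Ghat \<omega>)))) \<in> borel_measurable \<Omega>"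
    using m2 by measurable
  have "(\<integral>\<^sup>+\<omega>. (\<Sum>x. ennreal (f x * (pois_bayes G x - pois_bayes (Ghat \<omega>) x)^2)) \<partial>\<Omega>)
      \<le> (\<integral>\<^sup>+\<omega>. ennreal C * ennreal (hellinger_sq f (pois_marg (Ghat \<omega>))) + ennreal (C * (4 * eps) + Rterm + Tterm) \<partial>\<Omega>)"
    by (rule nn_integral_mono_AE[OF main_pw])
  also have "\<dots> = ennreal C * (\<integral>\<^sup>+\<omega>. ennreal (hellinger_sq f (pois_marg (Ghat \<omega>))) \<partial>\<Omega>) + ennreal (C * (4 * eps) + Rterm + Tterm)"
  proof -
    have "(\<integral>\<^sup>+\<omega>. ennreal C * ennreal (hellinger_sq f (pois_marg (Ghat \<omega>))) + ennreal (C * (4 * eps) + Rterm + Tterm) \<partial>\<Omega>)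
        = (\<integral>\<^sup>+\<omega>. ennreal C * ennreal (hellinger_sq f (pois_marg (Ghat \<omega>))) \<partial>\<Omega>) + (\<integral>\<^sup>+\<omega>. ennreal (C * (4 * eps) + Rterm + Tterm) \<partial>\<Omega>)"
      by (rule nn_integral_add[OF m1]) simp
    also have "(\<integral>\<^sup>+\<omega>. ennreal C * ennreal (hellinger_sq f (pois_marg (Ghat \<omega>))) \<partial>\<Omega>)
        = ennreal C * (\<integral>\<^sup>+\<omega>. ennreal (hellinger_sq f (pois_marg (Ghat \<omega>))) \<partial>\<Omega>)"
      by (rule nn_integral_cmult[OF m2])
    also have "(\<integral>\<^sup>+\<omega>. ennreal (C * (4 * eps) + Rterm + Tterm) \<partial>\<Omega>) = ennreal (C * (4 * eps) + Rterm + Tterm)"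
      by (simp add: Om.emeasure_space_1)
    finally show ?thesis .
  qed
  also have "\<dots> = ennreal C * ((\<integral>\<^sup>+\<omega>. ennreal (hellinger_sq f (pois_marg (Ghat \<omega>))) \<partial>\<Omega>) + ennreal (4 * eps)) + ennreal (Rterm + Tterm)"
  proof -
    have "ennreal (C * (4 * eps) + Rterm + Tterm) = ennreal (C * (4 * eps) + (Rterm + Tterm))"
      by (simp only: add.assoc)
    also have "\<dots> = ennreal (C * (4 * eps)) + ennreal (Rterm + Tterm)"
      by (rule ennreal_plus[OF CE0 add_nonneg_nonneg[OF R0 T0]])
    also have "ennreal (C * (4 * eps)) = ennreal C * ennreal (4 * eps)" by (rule ennreal_mult'[OF C0])
    finally have e: "ennreal (C * (4 * eps) + Rterm + Tterm) = ennreal C * ennreal (4 * eps) + ennreal (Rterm + Tterm)" .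
    show ?thesis unfolding e by (simp only: distrib_left add.assoc)
  qed
  finally show ?thesis unfolding C_def eps_def Rterm_def Tterm_def f_def .

qed

end
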